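(* Let $N\ge2$, $\beta>0$, real $\Delta_1,\dots,\Delta_4\in(0,2\pi)$ with $\sum_{I=1}^4\Delta_I=2\pi$, and integers $n_1,\dots,n_N,\tilde n_1,\dots,\tilde n_N$. Put $\bar n=\frac1N\sum_jn_j$, $\bar{\tilde n}=\frac1N\sum_j\tilde n_j$, $C=\Delta_3\Delta_4-\Delta_1\Delta_2$ and $$u_j=-\frac{i\beta}{N}(n_j-\bar n),\quad \tilde u_j=\frac{i\beta}{N}(\tilde n_j-\bar{\tilde n}),\quad v=\frac{iN}{\beta}C+2\pi\bar n,\quad \tilde v=-\frac{iN}{\beta}C-2\pi\bar{\tilde n}.$$ Define $E_{ij}=\sum_{a=1,2}F'(u_i-\tilde u_j+\Delta_a)-\sum_{b=3,4}F'(\tilde u_j-u_i+\Delta_b)$. Then $\sum_iu_i=\sum_i\tilde u_i=0$ and for all $i,j\in\{1,\dots,N\}$ $$0=-2\pi i n_i+iv+\frac1\beta\sum_{k=1}^NE_{ik},\qquad 0=-2\pi i\tilde n_j-i\tilde v+\frac1\beta\sum_{k=1}^NE_{kj}.$$ Moreover the function $$\mathcal V=2\pi\sum_{i=1}^N(n_iu_i-\tilde n_i\tilde u_i)-\sum_{i=1}^N(v\,u_i+\tilde v\,\tilde u_i)+\frac i\beta\sum_{i,j=1}^N\Big[\sum_{a=1,2}F(u_i-\tilde u_j+\Delta_a)+\sum_{b=3,4}F(\tilde u_j-u_i+\Delta_b)\Big]$$ evaluated at this configuration equals $\frac{iN^2}{\beta}\sum_{I=1}^4F(\Delta_I)+O(\beta)=\frac{iN^2}{2\beta}\sum_{a<b<c}\Delta_a\Delta_b\Delta_c+O(\beta)$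 as $\beta\to0^+$ with the integers fixed.
   Context: For complex $w$: $F(w)=\frac{w^3}{6}-\frac12\pi w^2\,\mathrm{sign}(\mathrm{Re}\,w)+\frac{\pi^2}{3}w$ and $F'(w)=\frac{w^2}{2}-\pi w\,\mathrm{sign}(\mathrm{Re}\,w)+\frac{\pi^2}{3}$. The sum $\sum_{a<b<c}$ runs over triples in $\{1,2,3,4\}$. The displayed equations are the high-temperature limit (torus modulus $\tau=i\beta/2\pi$) of the Bethe ansatz equations for the topologically twisted index of the Klebanov–Witten $\mathrm{SU}(N)\times\mathrm{SU}(N)$ conifold theory on $S^2\times T^2$, with bi-fundamentals $A_{1,2}$ (chemical potentials $\Delta_{1,2}$) and $B_{1,2}$ (chemical potentials $\Delta_{3,4}$), holonomies $u_i,\tilde u_j$ of the two gauge groups, Lagrange multipliers $v,\tilde v$ for the two $\mathrm{SU}(N)$ constraints, and $\mathcal V$ the Bethe potential. *)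

theory Defs
  imports Complex_Main "HOL-Library.Landau_Symbols"
begin

definition F :: "complex \<Rightarrow> complex" where
  "F (w::complex) = w^3 / 6 - (1/2) * complex_of_real pi * w^2 * complex_of_real (sgn (Re w)) + complex_of_real (pi^2 / 3) * w"

definition F' :: "complex \<Rightarrow> complex" where
  "F' (w::complex) = w^2 / 2 - complex_of_real pi * w * complex_of_real (sgn (Re w)) + complex_of_real (pi^2 / 3)"

definition avg :: "nat \<Rightarrow> (nat \<Rightarrow> int) \<Rightarrow> real" where
  "avg N n = (\<Sum>j=1..N. real_of_int (n j)) / real N"

definition Cc :: "(nat \<Rightarrow> real) \<Rightarrow> real" where
  "Cc \<Delta> = \<Delta> 3 * \<Delta> 4 - \<Delta> 1 * \<Delta> 2"

definition u_sol :: "nat \<Rightarrow> real \<Rightarrow> (nat \<Rightarrow> int) \<Rightarrow> nat \<Rightarrow> complex" where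
  "u_sol N \<beta> n j = - (\<i> * \<beta> / N) * (of_int (n j) - avg N n)"

definition ut_sol :: "nat \<Rightarrow> real \<Rightarrow> (nat \<Rightarrow> int) \<Rightarrow> nat \<Rightarrow> complex" where
  "ut_sol N \<beta> nt j = (\<i> * \<beta> / N) * (of_int (nt j) - avg N nt)"

definition v_sol :: "nat \<Rightarrow> real \<Rightarrow> (nat \<Rightarrow> real) \<Rightarrow> (nat \<Rightarrow> int) \<Rightarrow> complex" where
  "v_sol N \<beta> \<Delta> n = \<i> * N / \<beta> * Cc \<Delta> + 2 * pi * avg N n"

definition vt_sol :: "nat \<Rightarrow> real \<Rightarrow> (nat \<Rightarrow> real) \<Rightarrow> (nat \<Rightarrow> int) \<Rightarrow> complex" where
  "vt_sol N \<beta> \<Delta> nt = - \<i> * N / \<beta> * Cc \<Delta> - 2 * pi * avg N nt"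

definition E :: "(nat \<Rightarrow> real) \<Rightarrow> (nat \<Rightarrow> complex) \<Rightarrow> (nat \<Rightarrow> complex) \<Rightarrow> nat \<Rightarrow> nat \<Rightarrow> complex" where
  "E \<Delta> (u::nat\<Rightarrow>complex) (ut::nat\<Rightarrow>complex) i j = (\<Sum>a\<in>{1,2}. F' (u i - ut j + \<Delta> a)) - (\<Sum>b\<in>{3,4}. F' (ut j - u i + \<Delta> b))"

definition Bethe_V :: "nat \<Rightarrow> real \<Rightarrow> (nat \<Rightarrow> real) \<Rightarrow> (nat \<Rightarrow> int) \<Rightarrow> (nat \<Rightarrow> int)
    \<Rightarrow> (nat \<Rightarrow> complex) \<Rightarrow> (nat \<Rightarrow> complex) \<Rightarrow> complex \<Rightarrow> complex \<Rightarrow> complex" where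
  "Bethe_V N \<beta> \<Delta> n nt (u::nat\<Rightarrow>complex) (ut::nat\<Rightarrow>complex) (v::complex) (vt::complex) =
     2 * complex_of_real pi * (\<Sum>i=1..N. of_int (n i) * u i - of_int (nt i) * ut i)
     - (\<Sum>i=1..N. v * u i + vt * ut i)
     + \<i> / \<beta> * (\<Sum>i=1..N. \<Sum>j=1..N.
          (\<Sum>a\<in>{1,2}. F (u i - ut j + \<Delta> a)) + (\<Sum>b\<in>{3,4}. F (ut j - u i + \<Delta> b)))"

end

theory Submission imports Defs begin

lemma F'_pos: "Re w > 0 \<Longrightarrow> F' w = w^2/2 - of_real pi * w + of_real (pi^2/3)"
  by (simp add: F'_def)
lemma F_pos: "Re w > 0 \<Longrightarrow> F w = w^3/6 - (1/2) * of_real pi * w^2 + of_real (pi^2/3) * w"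
  by (simp add: F_def)

lemma Re_u: "Re (u_sol N \<beta> n j) = 0" by (simp add: u_sol_def)
lemma Re_ut: "Re (ut_sol N \<beta> n j) = 0" by (simp add: ut_sol_def)

lemma u_scale: "u_sol N \<beta> n j = of_real \<beta> * u_sol N 1 n j" by (simp add: u_sol_def)
lemma ut_scale: "ut_sol N \<beta> n j = of_real \<beta> * ut_sol N 1 n j" by (simp add: ut_sol_def)

lemma sum_u: "N > 0 \<Longrightarrow> (\<Sum>i=1..N. u_sol N \<beta> n i) = 0"
proof -
  assume N: "N > 0"
  have "(\<Sum>i=1..N. u_sol N \<beta> n i) = - (\<i> * \<beta> / N) * ((\<Sum>i=1..N. of_int (n i)) - of_nat N * of_real (avg N n))"
    unfolding u_sol_def by (simp add: sum_negf sum_divide_distrib[symmetric] sum_distrib_left[symmetric] sum_subtractf mult.assoc)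
  also have "(\<Sum>i=1..N. of_int (n i)) = (of_real (\<Sum>i=1..N. real_of_int (n i)) :: complex)" by simp
  also have "of_nat N * of_real (avg N n) = (of_real (\<Sum>i=1..N. real_of_int (n i)) :: complex)"
    using N by (simp add: avg_def)
  finally show ?thesis by simp
qed

lemma sum_ut: "N > 0 \<Longrightarrow> (\<Sum>i=1..N. ut_sol N \<beta> n i) = 0"
proof -
  assume N: "N > 0"
  have "(\<Sum>i=1..N. ut_sol N \<beta> n i) = (\<i> * \<beta> / N) * ((\<Sum>i=1..N. of_int (n i)) - of_nat N * of_real (avg N n))"
    unfolding ut_sol_def by (simp add: sum_divide_distrib[symmetric] sum_distrib_left[symmetric] sum_subtractf mult.assoc)
  also have "(\<Sum>i=1..N. of_int (n i)) = (of_real (\<Sum>i=1..N. real_of_int (n i)) :: complex)" by simp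
  also have "of_nat N * of_real (avg N n) = (of_real (\<Sum>i=1..N. real_of_int (n i)) :: complex)"
    using N by (simp add: avg_def)
  finally show ?thesis by simp
qed

lemma polyE: "d1+d2+d3+d4 = 2*p \<Longrightarrow>
  ((x+d1)^2/2 - p*(x+d1) + q + ((x+d2)^2/2 - p*(x+d2) + q)) - ((-x+d3)^2/2 - p*(-x+d3) + q + ((-x+d4)^2/2 - p*(-x+d4) + q))
   = (d3*d4 - d1*d2) - 2*p*(x::complex)"
proof -
  assume h: "d1+d2+d3+d4 = 2*p"
  then have d4: "d4 = 2*p - d1 - d2 - d3" by (simp add: algebra_simps)
  show ?thesis unfolding d4 by (simp add: field_simps power2_eq_square)
qed
lemma polyF: "d1+d2+d3+d4 = 2*p \<Longrightarrow>
  ((x+d1)^3/6 - (1/2)*p*(x+d1)^2 + q*(x+d1) + ((x+d2)^3/6 - (1/2)*p*(x+d2)^2 + q*(x+d2)))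
  + ((-x+d3)^3/6 - (1/2)*p*(-x+d3)^2 + q*(-x+d3) + ((-x+d4)^3/6 - (1/2)*p*(-x+d4)^2 + q*(-x+d4)))
   = (d1^3/6 - (1/2)*p*d1^2 + q*d1 + (d2^3/6 - (1/2)*p*d2^2 + q*d2 + (d3^3/6 - (1/2)*p*d3^2 + q*d3 + (d4^3/6 - (1/2)*p*d4^2 + q*d4))))
     + (d3*d4 - d1*d2) * x - p * (x::complex)^2"
proof -
  assume h: "d1+d2+d3+d4 = 2*p"
  then have d4: "d4 = 2*p - d1 - d2 - d3" by (simp add: algebra_simps)
  show ?thesis unfolding d4 by (simp add: field_simps power2_eq_square power3_eq_cube)
qed
lemma polyS: "d1+d2+d3+d4 = 2*p \<Longrightarrow> q = p^2/3 \<Longrightarrow>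
   (d1^3/6 - (1/2)*p*d1^2 + q*d1 + (d2^3/6 - (1/2)*p*d2^2 + q*d2 + (d3^3/6 - (1/2)*p*d3^2 + q*d3 + (d4^3/6 - (1/2)*p*d4^2 + q*d4))))
   = (d1*d2*d3 + d1*d2*d4 + d1*d3*d4 + d2*d3*d4)/(2::complex)"
proof -
  assume h: "d1+d2+d3+d4 = 2*p" and hq: "q = p^2/3"
  then have d4: "d4 = 2*p - d1 - d2 - d3" by (simp add: algebra_simps)
  show ?thesis unfolding d4 hq by (simp add: field_simps power2_eq_square power3_eq_cube)
qed

lemma four: "{1..4::nat} = {1,2,3,4}" by auto
lemma sum4: "(\<Sum>I=1..4::nat. f I) = f 1 + (f 2 + (f 3 + f 4))"
  unfolding four by simp
lemma triples: "{(a,b,c). 1 \<le> a \<and> a < b \<and> b < c \<and> c \<le> (4::nat)} = {(1,2,3),(1,2,4),(1,3,4),(2,3,4)}"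
  by auto


lemma E_eq:
  assumes re: "Re (u i - ut j) = 0" and pos: "\<forall>I\<in>{1..4}. 0 < \<Delta> I" and s: "(\<Sum>I=1..4. \<Delta> I) = 2*pi"
  shows "E \<Delta> u ut i j = of_real (Cc \<Delta>) - 2*of_real pi*(u i - ut j)"
proof -
  define x where "x = u i - ut j"
  have m: "ut j - u i = - x" by (simp add: x_def)
  have p: "\<And>I. I \<in> {1..4} \<Longrightarrow> 0 < \<Delta> I" using pos by auto
  have r1: "Re (x + of_real (\<Delta> I)) > 0" if "I \<in> {1..4}" for I using re p[OF that] by (simp add: x_def)
  have r2: "Re (- x + of_real (\<Delta> I)) > 0" if "I \<in> {1..4}" for I using re p[OF that] by (simp add: x_def)
  have s': "of_real (\<Delta> 1) + of_real (\<Delta> 2) + of_real (\<Delta> 3) + of_real (\<Delta> 4) = 2 * (of_real pi :: complex)"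
  proof -
    have "\<Delta> 1 + \<Delta> 2 + \<Delta> 3 + \<Delta> 4 = 2*pi" using s unfolding four by simp
    then have "complex_of_real (\<Delta> 1 + \<Delta> 2 + \<Delta> 3 + \<Delta> 4) = of_real (2*pi)" by simp
    then show ?thesis by simp
  qed
  have "E \<Delta> u ut i j = (F' (x + of_real (\<Delta> 1)) + F' (x + of_real (\<Delta> 2))) - (F' (- x + of_real (\<Delta> 3)) + F' (- x + of_real (\<Delta> 4)))"
    unfolding E_def m x_def[symmetric] by simp
  also have "\<dots> = of_real (Cc \<Delta>) - 2*of_real pi*x"
  proof -
    have a1: "Re (x + of_real (\<Delta> 1)) > 0" using r1[of 1] by simp
    have a2: "Re (x + of_real (\<Delta> 2)) > 0" using r1[of 2] by simp
    have a3: "Re (- x + of_real (\<Delta> 3)) > 0" using r2[of 3] by simp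
    have a4: "Re (- x + of_real (\<Delta> 4)) > 0" using r2[of 4] by simp
    show ?thesis unfolding F'_pos[OF a1] F'_pos[OF a2] F'_pos[OF a3] F'_pos[OF a4] Cc_def of_real_diff of_real_mult
      by (rule polyE[OF s'])
  qed
  finally show ?thesis by (simp add: x_def)
qed

lemma B_eq:
  assumes re: "Re (u i - ut j) = 0" and pos: "\<forall>I\<in>{1..4}. 0 < \<Delta> I" and s: "(\<Sum>I=1..4. \<Delta> I) = 2*pi"
  shows "(\<Sum>a\<in>{1,2}. F (u i - ut j + \<Delta> a)) + (\<Sum>b\<in>{3,4}. F (ut j - u i + \<Delta> b))
     = (\<Sum>I=1..4. F (\<Delta> I)) + of_real (Cc \<Delta>) * (u i - ut j) - of_real pi * (u i - ut j)^2"
proof -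
  define x where "x = u i - ut j"
  have m: "ut j - u i = - x" by (simp add: x_def)
  have p: "\<And>I. I \<in> {1..4} \<Longrightarrow> 0 < \<Delta> I" using pos by auto
  have r1: "Re (x + of_real (\<Delta> I)) > 0" if "I \<in> {1..4}" for I using re p[OF that] by (simp add: x_def)
  have r2: "Re (- x + of_real (\<Delta> I)) > 0" if "I \<in> {1..4}" for I using re p[OF that] by (simp add: x_def)
  have r0: "Re (of_real (\<Delta> I)) > 0" if "I \<in> {1..4}" for I using p[OF that] by simp
  have s': "of_real (\<Delta> 1) + of_real (\<Delta> 2) + of_real (\<Delta> 3) + of_real (\<Delta> 4) = 2 * (of_real pi :: complex)"
  proof -
    have "\<Delta> 1 + \<Delta> 2 + \<Delta> 3 + \<Delta> 4 = 2*pi" using s unfolding four by simp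
    then have "complex_of_real (\<Delta> 1 + \<Delta> 2 + \<Delta> 3 + \<Delta> 4) = of_real (2*pi)" by simp
    then show ?thesis by simp
  qed
  have "(\<Sum>a\<in>{1,2}. F (u i - ut j + \<Delta> a)) + (\<Sum>b\<in>{3,4}. F (ut j - u i + \<Delta> b))
      = (F (x + of_real (\<Delta> 1)) + F (x + of_real (\<Delta> 2))) + (F (- x + of_real (\<Delta> 3)) + F (- x + of_real (\<Delta> 4)))"
    unfolding m x_def[symmetric] by simp
  also have "\<dots> = (\<Sum>I=1..4. F (\<Delta> I)) + of_real (Cc \<Delta>) * x - of_real pi * x^2"
  proof -
    have a1: "Re (x + of_real (\<Delta> 1)) > 0" using r1[of 1] by simp
    have a2: "Re (x + of_real (\<Delta> 2)) > 0" using r1[of 2] by simp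
    have a3: "Re (- x + of_real (\<Delta> 3)) > 0" using r2[of 3] by simp
    have a4: "Re (- x + of_real (\<Delta> 4)) > 0" using r2[of 4] by simp
    have b1: "Re (of_real (\<Delta> 1)) > 0" using r0[of 1] by simp
    have b2: "Re (of_real (\<Delta> 2)) > 0" using r0[of 2] by simp
    have b3: "Re (of_real (\<Delta> 3)) > 0" using r0[of 3] by simp
    have b4: "Re (of_real (\<Delta> 4)) > 0" using r0[of 4] by simp
    show ?thesis unfolding sum4 F_pos[OF a1] F_pos[OF a2] F_pos[OF a3] F_pos[OF a4]
      F_pos[OF b1] F_pos[OF b2] F_pos[OF b3] F_pos[OF b4] Cc_def of_real_diff of_real_mult
      by (rule polyF[OF s'])
  qed
  finally show ?thesis by (simp add: x_def)
qed

lemma S_eq: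
  assumes pos: "\<forall>I\<in>{1..4}. 0 < \<Delta> I" and s: "(\<Sum>I=1..4. \<Delta> I) = 2*pi"
  shows "(\<Sum>I=1..4. F (\<Delta> I)) = (\<Sum>(a,b,c)\<in>{(a,b,c). 1 \<le> a \<and> a < b \<and> b < c \<and> c \<le> (4::nat)}.
                complex_of_real (\<Delta> a * \<Delta> b * \<Delta> c)) / 2"
proof -
  have p: "\<And>I. I \<in> {1..4} \<Longrightarrow> 0 < \<Delta> I" using pos by auto
  have r0: "Re (of_real (\<Delta> I)) > 0" if "I \<in> {1..4}" for I using p[OF that] by simp
  have s': "of_real (\<Delta> 1) + of_real (\<Delta> 2) + of_real (\<Delta> 3) + of_real (\<Delta> 4) = 2 * (of_real pi :: complex)"
  proof -
    have "\<Delta> 1 + \<Delta> 2 + \<Delta> 3 + \<Delta> 4 = 2*pi" using s unfolding four by simp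
    then have "complex_of_real (\<Delta> 1 + \<Delta> 2 + \<Delta> 3 + \<Delta> 4) = of_real (2*pi)" by simp
    then show ?thesis by simp
  qed
  show ?thesis unfolding four triples
    using polyS[OF s', of "of_real (pi^2/3)"] by (simp add: F_pos[OF r0])
qed

lemma sumE: "(\<Sum>k=1..N. c - 2*p*(a - b k)) = of_nat N * c - 2*p*(of_nat N * a) + 2*p*(\<Sum>k=1..N. b k)"
  for c p a :: complex
  by (simp add: sum_subtractf sum.distrib sum_distrib_left algebra_simps)

lemma sumE2: "(\<Sum>k=1..N. c - 2*p*(b k - a)) = of_nat N * c + 2*p*(of_nat N * a) - 2*p*(\<Sum>k=1..N. b k)"
  for c p a :: complex
  by (simp add: sum_subtractf sum.distrib sum_distrib_left algebra_simps)


lemma t1: assumes bne: "complex_of_real \<beta> \<noteq> 0" and Nne: "(of_nat N :: complex) \<noteq> 0"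
  shows "0 = - 2 * pi * \<i> * of_int (n i) + \<i> * v_sol N \<beta> \<Delta> n
     + 1 / complex_of_real \<beta> * (of_nat N * of_real (Cc \<Delta>) - 2*of_real pi*(of_nat N * u_sol N \<beta> n i))"
proof -
  have u: "of_nat N * u_sol N \<beta> n i = - (\<i> * of_real \<beta>) * (of_int (n i) - of_real (avg N n))"
    using Nne by (simp add: u_sol_def)
  have v: "\<i> * v_sol N \<beta> \<Delta> n = - (of_nat N * of_real (Cc \<Delta>)) / of_real \<beta> + 2*of_real pi*\<i>*of_real (avg N n)"
    by (simp add: v_sol_def algebra_simps)
  show ?thesis unfolding u v using bne by (simp add: field_simps)
qed
lemma t2: assumes bne: "complex_of_real \<beta> \<noteq> 0" and Nne: "(of_nat N :: complex) \<noteq> 0"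
  shows "0 = - 2 * pi * \<i> * of_int (nt j) - \<i> * vt_sol N \<beta> \<Delta> nt
     + 1 / complex_of_real \<beta> * (of_nat N * of_real (Cc \<Delta>) + 2*of_real pi*(of_nat N * ut_sol N \<beta> nt j))"
proof -
  have u: "of_nat N * ut_sol N \<beta> nt j = (\<i> * of_real \<beta>) * (of_int (nt j) - of_real (avg N nt))"
    using Nne by (simp add: ut_sol_def)
  have v: "\<i> * vt_sol N \<beta> \<Delta> nt = (of_nat N * of_real (Cc \<Delta>)) / of_real \<beta> - 2*of_real pi*\<i>*of_real (avg N nt)"
    by (simp add: vt_sol_def algebra_simps)
  show ?thesis unfolding u v using bne by (simp add: field_simps)
qed

lemma part2_eq:
  fixes N :: nat and \<Delta> :: "nat \<Rightarrow> real" and n nt :: "nat \<Rightarrow> int"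
  assumes N0: "N > 0" and pos: "\<forall>I\<in>{1..4}. 0 < \<Delta> I" and s: "(\<Sum>I=1..4. \<Delta> I) = 2 * pi"
    and b: "\<beta> > 0"
  shows "Bethe_V N \<beta> \<Delta> n nt (u_sol N \<beta> n) (ut_sol N \<beta> nt) (v_sol N \<beta> \<Delta> n) (vt_sol N \<beta> \<Delta> nt)
               - \<i> * of_nat (N^2) / complex_of_real \<beta> * (\<Sum>I=1..4. F (\<Delta> I))
     = of_real \<beta> * (2*of_real pi*(\<Sum>i=1..N. of_int (n i) * u_sol N 1 n i - of_int (nt i) * ut_sol N 1 nt i)
          - \<i>*of_real pi*(\<Sum>i=1..N. \<Sum>j=1..N. (u_sol N 1 n i - ut_sol N 1 nt j)^2))"
proof -
  define u where "u = u_sol N \<beta> n"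
  define w where "w = ut_sol N \<beta> nt"
  define a where "a = u_sol N 1 n"
  define bb where "bb = ut_sol N 1 nt"
  define S where "S = (\<Sum>I=1..4. F (\<Delta> I))"
  define C where "C = complex_of_real (Cc \<Delta>)"
  have re: "Re (u i - w j) = 0" for i j by (simp add: u_def w_def Re_u Re_ut)
  have su: "(\<Sum>i=1..N. u i) = 0" unfolding u_def by (rule sum_u[OF N0])
  have sw: "(\<Sum>i=1..N. w i) = 0" unfolding w_def by (rule sum_ut[OF N0])
  have us: "u i = of_real \<beta> * a i" for i unfolding u_def a_def by (rule u_scale)
  have ws: "w i = of_real \<beta> * bb i" for i unfolding w_def bb_def by (rule ut_scale)
  have h1: "(\<Sum>i=1..N. \<Sum>j=1..N. (\<Sum>a\<in>{1,2}. F (u i - w j + \<Delta> a)) + (\<Sum>b\<in>{3,4}. F (w j - u i + \<Delta> b)))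
     = (\<Sum>i=1..N. \<Sum>j=1..N. S + C * (u i - w j) - of_real pi * (u i - w j)^2)"
    unfolding S_def C_def
    by (intro sum.cong refl) (rule B_eq[where u=u and ut=w, OF re pos s])
  have h2: "(\<Sum>i=1..N. \<Sum>j=1..N. S + C * (u i - w j) - of_real pi * (u i - w j)^2)
     = of_nat N * (of_nat N * S) + C * (\<Sum>i=1..N. \<Sum>j=1..N. (u i - w j)) - of_real pi * (\<Sum>i=1..N. \<Sum>j=1..N. (u i - w j)^2)"
    unfolding sum_subtractf sum.distrib sum_distrib_left[symmetric] by simp
  have h3a: "(\<Sum>i=1..N. \<Sum>j=1..N. (u i - w j)) = (\<Sum>i=1..N. of_nat N * u i - (\<Sum>j=1..N. w j))"
    by (simp add: sum_subtractf)
  have h3: "(\<Sum>i=1..N. \<Sum>j=1..N. (u i - w j)) = 0"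
    proof -
    have "(\<Sum>i=1..N. of_nat N * u i) = of_nat N * (\<Sum>i=1..N. u i)" by (rule sum_distrib_left[symmetric])
    then show ?thesis unfolding h3a sum_subtractf su sw by simp
  qed
  have h4: "(\<Sum>i=1..N. \<Sum>j=1..N. (u i - w j)^2) = of_real \<beta>^2 * (\<Sum>i=1..N. \<Sum>j=1..N. (a i - bb j)^2)"
  proof -
    have "(u i - w j)^2 = of_real \<beta>^2 * (a i - bb j)^2" for i j
      unfolding us ws by (simp add: power_mult_distrib right_diff_distrib[symmetric])
    then show ?thesis by (simp add: sum_distrib_left)
  qed
  have h5: "(\<Sum>i=1..N. v_sol N \<beta> \<Delta> n * u i + vt_sol N \<beta> \<Delta> nt * w i) = 0"
    unfolding sum.distrib sum_distrib_left[symmetric] su sw by simp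
  have h6: "(\<Sum>i=1..N. of_int (n i) * u i - of_int (nt i) * w i) = of_real \<beta> * (\<Sum>i=1..N. of_int (n i) * a i - of_int (nt i) * bb i)"
    unfolding us ws by (simp add: sum_distrib_left algebra_simps)
  have bne: "complex_of_real \<beta> \<noteq> 0" using b by simp
  have "Bethe_V N \<beta> \<Delta> n nt u w (v_sol N \<beta> \<Delta> n) (vt_sol N \<beta> \<Delta> nt)
      = 2 * complex_of_real pi * (of_real \<beta> * (\<Sum>i=1..N. of_int (n i) * a i - of_int (nt i) * bb i))
        + \<i> / \<beta> * (of_nat N * (of_nat N * S) - of_real pi * (of_real \<beta>^2 * (\<Sum>i=1..N. \<Sum>j=1..N. (a i - bb j)^2)))"
    unfolding Bethe_V_def h1 h2 h3 h4 h5 h6 by simp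
  then show ?thesis unfolding u_def[symmetric] w_def[symmetric] a_def[symmetric] bb_def[symmetric] S_def[symmetric]
    using bne by (simp add: field_simps power2_eq_square)
qed

theorem mainTheorem7:
  fixes N :: nat and \<Delta> :: "nat \<Rightarrow> real" and n nt :: "nat \<Rightarrow> int"
  assumes "N \<ge> 2"
    and "\<forall>I\<in>{1..4}. 0 < \<Delta> I \<and> \<Delta> I < 2 * pi"
    and "(\<Sum>I=1..4. \<Delta> I) = 2 * pi"
  shows "(\<forall>\<beta>::real. \<beta> > 0 \<longrightarrow>
           ((\<Sum>i=1..N. u_sol N \<beta> n i) = 0 \<and> (\<Sum>i=1..N. ut_sol N \<beta> nt i) = 0 \<and>
           (\<forall>i\<in>{1..N}. \<forall>j\<in>{1..N}.
              0 = - 2 * pi * \<i> * of_int (n i) + \<i> * v_sol N \<beta> \<Delta> n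
                  + 1 / complex_of_real \<beta> * (\<Sum>k=1..N. E \<Delta> (u_sol N \<beta> n) (ut_sol N \<beta> nt) i k) \<and>
              0 = - 2 * pi * \<i> * of_int (nt j) - \<i> * vt_sol N \<beta> \<Delta> nt
                  + 1 / complex_of_real \<beta> * (\<Sum>k=1..N. E \<Delta> (u_sol N \<beta> n) (ut_sol N \<beta> nt) k j))))
    \<and> ((\<lambda>\<beta>::real. Bethe_V N \<beta> \<Delta> n nt (u_sol N \<beta> n) (ut_sol N \<beta> nt) (v_sol N \<beta> \<Delta> n) (vt_sol N \<beta> \<Delta> nt)
               - \<i> * of_nat (N^2) / complex_of_real \<beta> * (\<Sum>I=1..4. F (\<Delta> I)))
         \<in> O[at_right 0](\<lambda>\<beta>. complex_of_real \<beta>))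
    \<and> (\<forall>\<beta>::real. \<beta> > 0 \<longrightarrow> \<i> * of_nat (N^2) / complex_of_real \<beta> * (\<Sum>I=1..4. F (\<Delta> I))
           = \<i> * of_nat (N^2) / (2 * complex_of_real \<beta>) *
             (\<Sum>(a,b,c)\<in>{(a,b,c). 1 \<le> a \<and> a < b \<and> b < c \<and> c \<le> (4::nat)}.
                complex_of_real (\<Delta> a * \<Delta> b * \<Delta> c)))"
proof -
  have N0: "N > 0" using assms(1) by simp
  have pos: "\<forall>I\<in>{1..4}. 0 < \<Delta> I" using assms(2) by simp
  note s = assms(3)
  have Nne: "(of_nat N :: complex) \<noteq> 0" using N0 by simp
  have P1: "\<forall>\<beta>::real. \<beta> > 0 \<longrightarrow>
           ((\<Sum>i=1..N. u_sol N \<beta> n i) = 0 \<and> (\<Sum>i=1..N. ut_sol N \<beta> nt i) = 0 \<and>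
           (\<forall>i\<in>{1..N}. \<forall>j\<in>{1..N}.
              0 = - 2 * pi * \<i> * of_int (n i) + \<i> * v_sol N \<beta> \<Delta> n
                  + 1 / complex_of_real \<beta> * (\<Sum>k=1..N. E \<Delta> (u_sol N \<beta> n) (ut_sol N \<beta> nt) i k) \<and>
              0 = - 2 * pi * \<i> * of_int (nt j) - \<i> * vt_sol N \<beta> \<Delta> nt
                  + 1 / complex_of_real \<beta> * (\<Sum>k=1..N. E \<Delta> (u_sol N \<beta> n) (ut_sol N \<beta> nt) k j)))"
  proof (intro allI impI conjI ballI)
    fix \<beta> :: real and i j assume b: "\<beta> > 0"
    have bne: "complex_of_real \<beta> \<noteq> 0" using b by simp
    show "(\<Sum>i=1..N. u_sol N \<beta> n i) = 0" by (rule sum_u[OF N0])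
    show "(\<Sum>i=1..N. ut_sol N \<beta> nt i) = 0" by (rule sum_ut[OF N0])
    let ?u = "u_sol N \<beta> n" and ?w = "ut_sol N \<beta> nt"
    have re: "Re (?u a - ?w c) = 0" for a c by (simp add: Re_u Re_ut)
    have Eq: "E \<Delta> ?u ?w a c = of_real (Cc \<Delta>) - 2*of_real pi*(?u a - ?w c)" for a c
      by (rule E_eq[where u="?u" and ut="?w" and i=a and j=c, OF re pos s])
    have e1: "(\<Sum>k=1..N. E \<Delta> ?u ?w i k) = of_nat N * of_real (Cc \<Delta>) - 2*of_real pi*(of_nat N * ?u i)"
      unfolding Eq sumE sum_ut[OF N0] by simp
    have e2: "(\<Sum>k=1..N. E \<Delta> ?u ?w k j) = of_nat N * of_real (Cc \<Delta>) + 2*of_real pi*(of_nat N * ?w j)"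
      unfolding Eq sumE2 sum_u[OF N0] by simp
    show "0 = - 2 * pi * \<i> * of_int (n i) + \<i> * v_sol N \<beta> \<Delta> n
                  + 1 / complex_of_real \<beta> * (\<Sum>k=1..N. E \<Delta> (u_sol N \<beta> n) (ut_sol N \<beta> nt) i k)"
      unfolding e1 by (rule t1[OF bne Nne])
    show "0 = - 2 * pi * \<i> * of_int (nt j) - \<i> * vt_sol N \<beta> \<Delta> nt
                  + 1 / complex_of_real \<beta> * (\<Sum>k=1..N. E \<Delta> (u_sol N \<beta> n) (ut_sol N \<beta> nt) k j)"
      unfolding e2 by (rule t2[OF bne Nne])
  qed
  define K where "K = (2*of_real pi*(\<Sum>i=1..N. of_int (n i) * u_sol N 1 n i - of_int (nt i) * ut_sol N 1 nt i)
          - \<i>*of_real pi*(\<Sum>i=1..N. \<Sum>j=1..N. (u_sol N 1 n i - ut_sol N 1 nt j)^2))"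
  have P2: "(\<lambda>\<beta>::real. Bethe_V N \<beta> \<Delta> n nt (u_sol N \<beta> n) (ut_sol N \<beta> nt) (v_sol N \<beta> \<Delta> n) (vt_sol N \<beta> \<Delta> nt)
               - \<i> * of_nat (N^2) / complex_of_real \<beta> * (\<Sum>I=1..4. F (\<Delta> I)))
         \<in> O[at_right 0](\<lambda>\<beta>. complex_of_real \<beta>)"
  proof (rule bigoI[where c="norm K"])
    show "\<forall>\<^sub>F \<beta> in at_right 0. norm (Bethe_V N \<beta> \<Delta> n nt (u_sol N \<beta> n) (ut_sol N \<beta> nt) (v_sol N \<beta> \<Delta> n) (vt_sol N \<beta> \<Delta> nt)
               - \<i> * of_nat (N^2) / complex_of_real \<beta> * (\<Sum>I=1..4. F (\<Delta> I))) \<le> norm K * norm (complex_of_real \<beta>)"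
      using eventually_at_right_less[of "0::real"]
    proof (rule eventually_mono)
      fix \<beta> :: real assume b: "0 < \<beta>"
      show "norm (Bethe_V N \<beta> \<Delta> n nt (u_sol N \<beta> n) (ut_sol N \<beta> nt) (v_sol N \<beta> \<Delta> n) (vt_sol N \<beta> \<Delta> nt)
               - \<i> * of_nat (N^2) / complex_of_real \<beta> * (\<Sum>I=1..4. F (\<Delta> I))) \<le> norm K * norm (complex_of_real \<beta>)"
        unfolding part2_eq[OF N0 pos s b] K_def[symmetric] by (simp add: norm_mult)
    qed
  qed
  have P3: "\<forall>\<beta>::real. \<beta> > 0 \<longrightarrow> \<i> * of_nat (N^2) / complex_of_real \<beta> * (\<Sum>I=1..4. F (\<Delta> I))
           = \<i> * of_nat (N^2) / (2 * complex_of_real \<beta>) *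
             (\<Sum>(a,b,c)\<in>{(a,b,c). 1 \<le> a \<and> a < b \<and> b < c \<and> c \<le> (4::nat)}.
                complex_of_real (\<Delta> a * \<Delta> b * \<Delta> c))"
    unfolding S_eq[OF pos s] by simp
  show ?thesis by (rule conjI[OF P1 conjI[OF P2 P3]])
qed

end
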